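(* Let $1\le K<d$ be integers. For $\lambda\in(0,1)$ let $\bar F_\lambda$ be the solution of $\bar F'(w)=T_\lambda(\bar F(w))-\bar F(w)$, $\bar F(0)=\lambda$, with $T_\lambda$ as below, and let $\mathbb E[W_\lambda]=\frac1\lambda\int_0^\infty T_\lambda(\bar F_\lambda(w))\,dw$. Then $$\lim_{\lambda\to1^-}-\frac{\mathbb E[W_\lambda]}{\log(1-\lambda)}=\frac{K}{d-K}.$$
   Context: For integers $1\le K<d$ and $\lambda\in(0,1)$, $T_\lambda(u)=\frac{\lambda}{K}\sum_{j=0}^{K-1}(K-j)\binom{d}{j}u^{d-j}(1-u)^j$ for $u\in[0,\infty)$ (the LL($d,K$) policy: batches of $K$ exponential(1) jobs sent to the $K$ least loaded of $d$ sampled servers). *)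

theory Defs
  imports "HOL-Analysis.Analysis"
begin

definition T_LL :: "nat \<Rightarrow> nat \<Rightarrow> real \<Rightarrow> real \<Rightarrow> real" where
  "T_LL d K lam u = lam / real K *
     (\<Sum>j<K. real (K - j) * real (d choose j) * u ^ (d - j) * (1 - u) ^ j)"

definition mean_wait :: "nat \<Rightarrow> nat \<Rightarrow> real \<Rightarrow> (real \<Rightarrow> real) \<Rightarrow> real" where
  "mean_wait d K lam F = (1 / lam) * integral {0..} (\<lambda>w. T_LL d K lam (F w))"

end

theory Submission
  imports Defs "HOL-Real_Asymp.Real_Asymp"
begin


definition SS :: "nat \<Rightarrow> nat \<Rightarrow> real \<Rightarrow> real" where
  "SS d K u = (\<Sum>j<K. real (K - j) * real (d choose j) * u ^ (d - j) * (1 - u) ^ j)"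

lemma T_SS: "T_LL d K lam u = lam / real K * SS d K u"
  by (simp add: T_LL_def SS_def)

lemma binom_sum1: "(\<Sum>j\<le>d. real (d choose j) * x^j * u^(d-j)) = (x+u)^d"
  by (simp add: binomial_ring)

lemma binom_mean: "(\<Sum>j\<le>d. real j * (real (d choose j) * x^j * u^(d-j))) = real d * x * (x+u)^(d-1)"
proof (cases d)
  case 0 then show ?thesis by simp
next
  case (Suc n)
  have "(\<Sum>j\<le>d. real j * (real (d choose j) * x^j * u^(d-j)))
      = (\<Sum>k\<le>n. real (Suc k) * (real (Suc n choose Suc k) * x^(Suc k) * u^(Suc n - Suc k)))"
    unfolding Suc by (subst sum.atMost_Suc_shift) simp
  also have "\<dots> = (\<Sum>k\<le>n. real (Suc n) * x * (real (n choose k) * x^k * u^(n-k)))"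
  proof (rule sum.cong[OF refl])
    fix k assume "k \<in> {..n}"
    have "real (Suc k) * real (Suc n choose Suc k) = real (Suc n) * real (n choose k)"
      using Suc_times_binomial[of k n] by (metis of_nat_mult)
    show "real (Suc k) * (real (Suc n choose Suc k) * x^(Suc k) * u^(Suc n - Suc k))
        = real (Suc n) * x * (real (n choose k) * x^k * u^(n-k))"
    proof -
      have "real (Suc k) * (real (Suc n choose Suc k) * x^(Suc k) * u^(Suc n - Suc k))
          = (real (Suc k) * real (Suc n choose Suc k)) * (x * x^k * u^(n-k))" by simp
      also have "\<dots> = real (Suc n) * real (n choose k) * (x * x^k * u^(n-k))" using \<open>real (Suc k) * real (Suc n choose Suc k) = real (Suc n) * real (n choose k)\<close> by simp
      finally show ?thesis by simp
    qed
  qed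
  also have "\<dots> = real (Suc n) * x * (x+u)^n"
    by (simp add: sum_distrib_left[symmetric] binomial_ring)
  finally show ?thesis using Suc by simp
qed

lemma SS_eq:
  assumes "K \<le> d"
  shows "SS d K u = real K - (\<Sum>j\<le>d. real (min j K) * (real (d choose j) * (1-u)^j * u^(d-j)))"
proof -
  define p where "p j = real (d choose j) * (1-u)^j * u^(d-j)" for j
  have s1: "(\<Sum>j\<le>d. p j) = 1" unfolding p_def using binom_sum1[of d "1-u" u] by simp
  have "real K - (\<Sum>j\<le>d. real (min j K) * p j) = (\<Sum>j\<le>d. real K * p j) - (\<Sum>j\<le>d. real (min j K) * p j)"
    by (simp add: sum_distrib_left[symmetric] s1)
  also have "\<dots> = (\<Sum>j\<le>d. real (K - j) * p j)"
    unfolding sum_subtractf[symmetric] left_diff_distrib[symmetric]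
    by (rule sum.cong[OF refl]) (simp add: min_def of_nat_diff)
  also have "\<dots> = (\<Sum>j<K. real (K - j) * p j)"
    by (rule sum.mono_neutral_right) (use assms in auto)
  also have "\<dots> = SS d K u" unfolding SS_def p_def by (simp add: algebra_simps)
  finally show ?thesis unfolding p_def by simp
qed


lemma SS_nonneg: assumes "0 \<le> u" "u \<le> 1" shows "0 \<le> SS d K u"
  unfolding SS_def using assms by (intro sum_nonneg) simp

context
  fixes d K :: nat and u :: real
  assumes K1: "1 \<le> K" and Kd: "K < d" and u0: "0 \<le> u" and u1: "u \<le> 1"
begin

definition pp where "pp j = real (d choose j) * (1-u)^j * u^(d-j)"

lemma pp_nonneg: "0 \<le> pp j" unfolding pp_def using u0 u1 by simp

lemma SS_M: "SS d K u = real K - (\<Sum>j\<le>d. real (min j K) * pp j)"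
  unfolding pp_def using SS_eq[of K d u] Kd by simp

lemma mean_pp: "(\<Sum>j\<le>d. real j * pp j) = real d * (1-u)"
  using binom_mean[of d "1-u" u] unfolding pp_def by simp

lemma SS_ge: "SS d K u \<ge> real K - real d * (1-u)"
proof -
  have "(\<Sum>j\<le>d. real (min j K) * pp j) \<le> (\<Sum>j\<le>d. real j * pp j)"
    by (intro sum_mono mult_right_mono) (auto simp: pp_nonneg)
  then show ?thesis using SS_M mean_pp by simp
qed

lemma SS_le1: "SS d K u \<le> real K - real d * (1-u) * u^(d-1)"
proof -
  have "real (min 1 K) * pp 1 \<le> (\<Sum>j\<le>d. real (min j K) * pp j)"
    by (rule member_le_sum) (use Kd in \<open>auto simp: pp_nonneg\<close>)
  moreover have "real (min 1 K) * pp 1 = real d * (1-u) * u^(d-1)"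
    using K1 by (simp add: pp_def min_def)
  ultimately show ?thesis using SS_M by simp
qed

lemma SS_le2: "SS d K u \<le> real K * u * (1 - (1-u)^(d-1))"
proof -
  have pt: "real K / real d * real j * pp j + (if j = d - 1 then real K / real d * pp j else 0)
      \<le> real (min j K) * pp j" if "j \<le> d" for j
  proof -
    have "real K / real d * real j + (if j = d - 1 then real K / real d else 0) \<le> real (min j K)"
    proof (cases "j = d - 1")
      case True
      then have "real K / real d * real j + real K / real d = real K"
        using Kd by (simp add: field_simps of_nat_diff)
      moreover have "min j K = K" using True Kd by simp
      ultimately show ?thesis using True by simp
    next
      case False
      have "real K / real d * real j \<le> real (min j K)"
      proof (cases "j \<le> K")
        case True
        have "real K / real d \<le> 1" using Kd by simp
        then have "real K / real d * real j \<le> 1 * real j" by (intro mult_right_mono) auto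
        then show ?thesis using True by (simp add: min_def)
      next
        case False
        have "real j / real d \<le> 1" using that Kd by (simp add: divide_le_eq_1)
        then have "real K * (real j / real d) \<le> real K * 1" by (intro mult_left_mono) auto
        then show ?thesis using False by (simp add: min_def)
      qed
      then show ?thesis using False by simp
    qed
    from mult_right_mono[OF this pp_nonneg[of j]] show ?thesis
      by (simp add: algebra_simps split: if_splits)
  qed
  have "(\<Sum>j\<le>d. real K / real d * real j * pp j + (if j = d - 1 then real K / real d * pp j else 0))
      \<le> (\<Sum>j\<le>d. real (min j K) * pp j)"
    by (intro sum_mono pt) auto
  moreover have "(\<Sum>j\<le>d. real K / real d * real j * pp j + (if j = d - 1 then real K / real d * pp j else 0))
      = real K / real d * (\<Sum>j\<le>d. real j * pp j) + real K / real d * pp (d-1)"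
    by (simp add: sum.distrib sum_distrib_left mult.assoc)
  moreover have "pp (d-1) = real d * (1-u)^(d-1) * u"
  proof -
    have "d - (d - 1) = 1" using Kd by simp
    then show ?thesis unfolding pp_def using Kd by (simp add: binomial_symmetric[symmetric])
  qed
  ultimately have "real K / real d * (real d * (1-u)) + real K / real d * (real d * (1-u)^(d-1) * u)
     \<le> (\<Sum>j\<le>d. real (min j K) * pp j)" using mean_pp by simp
  moreover have "real K / real d * (real d * (1-u)) + real K / real d * (real d * (1-u)^(d-1) * u)
     = real K * (1-u) + real K * (1-u)^(d-1) * u" using Kd by (simp add: field_simps)
  ultimately show ?thesis using SS_M by (simp add: algebra_simps)
qed

end



lemma T_bounds:
  assumes K1: "1 \<le> K" and Kd: "K < d" and u0: "0 \<le> u" and u1: "u \<le> 1" and l0: "0 < lam"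
  shows "0 \<le> T_LL d K lam u"
    and "T_LL d K lam u \<le> lam * u * (1 - (1-u)^(d-1))"
    and "T_LL d K lam u \<le> lam * u"
    and "T_LL d K lam u \<ge> lam * (1 - real d * (1-u) / real K)"
    and "T_LL d K lam u \<le> lam * (1 - real d * (1-u) * u^(d-1) / real K)"
proof -
  have Kp: "real K > 0" using K1 by simp
  have c: "lam / real K \<ge> 0" using l0 Kp by simp
  show "0 \<le> T_LL d K lam u" unfolding T_SS by (rule mult_nonneg_nonneg[OF c SS_nonneg[OF u0 u1]])
  have "T_LL d K lam u \<le> lam / real K * (real K * u * (1 - (1-u)^(d-1)))"
    unfolding T_SS by (rule mult_left_mono[OF SS_le2[OF K1 Kd u0 u1] c])
  also have "\<dots> = lam * u * (1 - (1-u)^(d-1))" using Kp by simp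
  finally show A: "T_LL d K lam u \<le> lam * u * (1 - (1-u)^(d-1))" .
  have "(1-u)^(d-1) \<ge> 0" using u1 by simp
  then have "lam * u * (1 - (1-u)^(d-1)) \<le> lam * u * 1"
    using l0 u0 by (intro mult_left_mono) auto
  then show "T_LL d K lam u \<le> lam * u" using A by simp
  have "T_LL d K lam u \<ge> lam / real K * (real K - real d * (1-u))"
    unfolding T_SS by (rule mult_left_mono[OF SS_ge[OF K1 Kd u0 u1] c])
  moreover have "lam / real K * (real K - real d * (1-u)) = lam * (1 - real d * (1-u) / real K)"
    using Kp by (simp add: field_simps)
  ultimately show "T_LL d K lam u \<ge> lam * (1 - real d * (1-u) / real K)" by simp
  have "T_LL d K lam u \<le> lam / real K * (real K - real d * (1-u) * u^(d-1))"
    unfolding T_SS by (rule mult_left_mono[OF SS_le1[OF K1 Kd u0 u1] c])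
  moreover have "lam / real K * (real K - real d * (1-u) * u^(d-1)) = lam * (1 - real d * (1-u) * u^(d-1) / real K)"
    using Kp by (simp add: field_simps)
  ultimately show "T_LL d K lam u \<le> lam * (1 - real d * (1-u) * u^(d-1) / real K)" by simp
qed

locale ode =
  fixes d K :: nat and lam :: real and f :: "real \<Rightarrow> real"
  assumes K1: "1 \<le> K" and Kd: "K < d" and l0: "0 < lam" and l1: "lam < 1"
    and f0: "f 0 = lam"
    and fd: "\<And>w. w \<ge> 0 \<Longrightarrow> (f has_real_derivative (T_LL d K lam (f w) - f w)) (at w within {0..})"
begin

abbreviation T where "T u \<equiv> T_LL d K lam u"

lemma fcont: "continuous_on {0..} f"
  proof (rule DERIV_continuous_on)
  fix x :: real assume "x \<in> {0..}"
  then show "(f has_real_derivative (T (f x) - f x)) (at x within {0..})" by (intro fd) simp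
qed

lemma fd_at: "w > 0 \<Longrightarrow> (f has_real_derivative (T (f w) - f w)) (at w)"
proof -
  assume "w > 0"
  have w0: "0 \<le> w" using \<open>w > 0\<close> by simp
  have "(f has_real_derivative (T (f w) - f w)) (at w within {0<..})"
    by (rule has_field_derivative_subset[OF fd[OF w0]]) auto
  moreover have "at w within {0<..} = at w" using \<open>w > 0\<close> by (intro at_within_open) auto
  ultimately show ?thesis by simp
qed

lemma bounds_upto:
  assumes t0: "t \<ge> 0" and inside: "\<And>w. 0 < w \<Longrightarrow> w < t \<Longrightarrow> 0 < f w \<and> f w < 1"
  shows "lam * exp (- t) \<le> f t" and "f t \<le> lam * exp (- ((1 - lam) * t))"
proof -
  have cont: "continuous_on {0..t} f" using fcont by (rule continuous_on_subset) auto
  have "exp 0 * f 0 \<le> exp t * f t"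
  proof (rule DERIV_nonneg_imp_increasing_open[OF t0])
    fix w assume w: "0 < w" "w < t"
    have fw: "0 \<le> f w" "f w \<le> 1" using inside[OF w] by auto
    have "((\<lambda>w. exp w * f w) has_real_derivative (exp w * f w + exp w * (T (f w) - f w))) (at w)"
      using DERIV_mult'[OF DERIV_exp fd_at[OF w(1)]] by (simp add: algebra_simps)
    moreover have "exp w * f w + exp w * (T (f w) - f w) = exp w * T (f w)" by (simp add: algebra_simps)
    moreover have "0 \<le> exp w * T (f w)" using T_bounds(1)[OF K1 Kd fw l0] by simp
    ultimately show "\<exists>y. ((\<lambda>w. exp w * f w) has_real_derivative y) (at w) \<and> 0 \<le> y" by auto
  next
    show "continuous_on {0..t} (\<lambda>w. exp w * f w)" by (intro continuous_intros cont)
  qed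
  then have "lam \<le> exp t * f t" using f0 by simp
  then show "lam * exp (- t) \<le> f t" by (simp add: exp_minus field_simps)
  have "exp ((1 - lam) * t) * f t \<le> exp ((1 - lam) * 0) * f 0"
  proof (rule DERIV_nonpos_imp_decreasing_open[OF t0])
    fix w assume w: "0 < w" "w < t"
    have fw: "0 \<le> f w" "f w \<le> 1" using inside[OF w] by auto
    have "((\<lambda>w. exp ((1 - lam) * w) * f w) has_real_derivative
        (exp ((1 - lam) * w) * (1 - lam) * f w + exp ((1 - lam) * w) * (T (f w) - f w))) (at w)"
    proof -
      have e: "((\<lambda>w. exp ((1 - lam) * w)) has_real_derivative exp ((1 - lam) * w) * (1 - lam)) (at w)"
        using DERIV_chain2[OF DERIV_exp DERIV_cmult[OF DERIV_ident, of "1 - lam"]] by simp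
      show ?thesis using DERIV_mult'[OF e fd_at[OF w(1)]] by (simp add: algebra_simps)
    qed
    moreover have "exp ((1 - lam) * w) * (1 - lam) * f w + exp ((1 - lam) * w) * (T (f w) - f w)
        = exp ((1 - lam) * w) * (T (f w) - lam * f w)" by (simp add: algebra_simps)
    moreover have "exp ((1 - lam) * w) * (T (f w) - lam * f w) \<le> 0"
      using T_bounds(3)[OF K1 Kd fw l0] by (simp add: mult_nonneg_nonpos)
    ultimately show "\<exists>y. ((\<lambda>w. exp ((1 - lam) * w) * f w) has_real_derivative y) (at w) \<and> y \<le> 0" by auto
  next
    show "continuous_on {0..t} (\<lambda>w. exp ((1 - lam) * w) * f w)" by (intro continuous_intros cont)
  qed
  then have "exp ((1 - lam) * t) * f t \<le> lam" using f0 by simp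
  then have "exp ((1 - lam) * t) * f t * exp (- ((1 - lam) * t)) \<le> lam * exp (- ((1 - lam) * t))"
    by (rule mult_right_mono) simp
  moreover have "exp ((1 - lam) * t) * f t * exp (- ((1 - lam) * t)) = f t"
    by (simp add: exp_minus)
  ultimately show "f t \<le> lam * exp (- ((1 - lam) * t))" by simp
qed

lemma frange: "w \<ge> 0 \<Longrightarrow> 0 < f w \<and> f w < 1"
proof (rule ccontr)
  assume w0: "w \<ge> 0" and nw: "\<not> (0 < f w \<and> f w < 1)"
  define Z where "Z = {0..} \<inter> f -` (- {0<..<1})"
  have cl: "closed Z" unfolding Z_def by (rule continuous_closed_preimage[OF fcont]) auto
  have ne: "Z \<noteq> {}" using w0 nw unfolding Z_def by auto
  have bb: "bdd_below Z" unfolding Z_def by (rule bdd_belowI[of _ 0]) auto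
  define t where "t = Inf Z"
  have tZ: "t \<in> Z" unfolding t_def by (rule closed_contains_Inf[OF ne bb cl])
  then have t0: "t \<ge> 0" unfolding Z_def by auto
  have inside: "0 < f v \<and> f v < 1" if "0 < v" "v < t" for v
  proof (rule ccontr)
    assume "\<not> (0 < f v \<and> f v < 1)"
    then have "v \<in> Z" using that unfolding Z_def by auto
    then have "t \<le> v" unfolding t_def by (rule cInf_lower[OF _ bb])
    then show False using that by simp
  qed
  have "lam * exp (- t) \<le> f t" "f t \<le> lam * exp (- ((1 - lam) * t))"
    using bounds_upto[OF t0 inside] by auto
  moreover have "lam * exp (- t) > 0" using l0 by simp
  moreover have "exp (- ((1 - lam) * t)) \<le> 1" using l1 t0 by simp
  then have "lam * exp (- ((1 - lam) * t)) \<le> lam" by (rule mult_left_le) (use l0 in simp)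
  ultimately have "0 < f t \<and> f t < 1" using l1 by linarith
  then show False using tZ unfolding Z_def by auto
qed

lemma fupper: "w \<ge> 0 \<Longrightarrow> f w \<le> lam * exp (- ((1 - lam) * w))"
  using bounds_upto(2)[of w] frange by auto

lemma fle: "w \<ge> 0 \<Longrightarrow> f w \<le> lam"
proof -
  assume "w \<ge> 0"
  have "exp (- ((1 - lam) * w)) \<le> 1" using l1 \<open>w \<ge> 0\<close> by simp
  then have "lam * exp (- ((1 - lam) * w)) \<le> lam" by (rule mult_left_le) (use l0 in simp)
  then show ?thesis using fupper[OF \<open>w \<ge> 0\<close>] by linarith
qed

lemma fanti: assumes "0 \<le> a" "a \<le> b" shows "f b \<le> f a"
proof (rule DERIV_nonpos_imp_decreasing_open[OF assms(2)])
  fix w assume w: "a < w" "w < b"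
  have fw: "0 \<le> f w" "f w \<le> 1" using frange[of w] w assms by auto
  have "lam * f w \<le> f w" by (rule mult_left_le_one_le) (use fw l0 l1 in auto)
  then have "T (f w) - f w \<le> 0" using T_bounds(3)[OF K1 Kd fw l0] by linarith
  then show "\<exists>y. (f has_real_derivative y) (at w) \<and> y \<le> 0" using fd_at[of w] w assms by auto
next
  show "continuous_on {a..b} f" using fcont by (rule continuous_on_subset) (use assms in auto)
qed

end



context ode begin

definition g where "g w = T (f w)"

lemma gcont: "continuous_on {0..} g"
  unfolding g_def T_LL_def by (intro continuous_intros fcont)

lemma g_nonneg: "w \<ge> 0 \<Longrightarrow> 0 \<le> g w"
  unfolding g_def using frange[of w] T_bounds(1)[OF K1 Kd _ _ l0, of "f w"] by auto

lemma g_le_exp: "w \<ge> 0 \<Longrightarrow> g w \<le> exp (- (1 - lam) * w)"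
proof -
  assume w: "w \<ge> 0"
  have fw: "0 \<le> f w" "f w \<le> 1" using frange[OF w] by auto
  have "g w \<le> lam * f w" unfolding g_def using T_bounds(3)[OF K1 Kd fw l0] .
  also have "\<dots> \<le> f w" by (rule mult_left_le_one_le) (use fw l0 l1 in auto)
  also have "\<dots> \<le> lam * exp (- ((1 - lam) * w))" by (rule fupper[OF w])
  also have "\<dots> \<le> exp (- ((1 - lam) * w))" by (rule mult_left_le_one_le) (use l0 l1 in auto)
  finally show ?thesis by (simp only: mult_minus_left)
qed

lemma g_int: "g integrable_on {0..}"
proof (rule measurable_bounded_by_integrable_imp_integrable_real)
  show "{0::real..} \<in> sets lebesgue" by simp
  show "g \<in> borel_measurable (lebesgue_on {0..})"
    by (rule continuous_imp_measurable_on_sets_lebesgue[OF gcont]) simp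
  show "(\<lambda>w. exp (- (1 - lam) * w)) integrable_on {0..}"
    using has_integral_exp_minus_to_infinity[of "1 - lam" 0] l1 by (auto simp: integrable_on_def)
  fix x :: real assume "x \<in> {0..}"
  then show "\<bar>g x\<bar> \<le> exp (- (1 - lam) * x)" using g_nonneg g_le_exp by simp
qed

lemma g_int_sub: "W \<ge> 0 \<Longrightarrow> g integrable_on {0..W}"
  by (rule integrable_on_subinterval[OF g_int]) auto

lemma integral_le_bound:
  assumes "\<And>n::nat. integral {0..real n} g \<le> B"
  shows "integral {0..} g \<le> B"
proof -
  define h where "h n x = (if x \<in> {0..real n} then g x else 0)" for n :: nat and x :: real
  have hint: "h n integrable_on {0..}" for n
  proof -
    have "{0..real n} \<inter> {0..} = {0..real n}" by auto
    then show ?thesis unfolding h_def integrable_restrict_Int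
      by (metis g_int_sub of_nat_0_le_iff)
  qed
  have hval: "integral {0..} (h n) = integral {0..real n} g" for n
    unfolding h_def integral_restrict_Int by (simp add: Int_absorb2)
  have "(\<lambda>n. integral {0..} (h n)) \<longlonglongrightarrow> integral {0..} g"
  proof (rule dominated_convergence(2)[OF hint g_int])
    fix n :: nat and x :: real assume "x \<in> {0..}"
    then show "norm (h n x) \<le> g x" using g_nonneg unfolding h_def by auto
  next
    fix x :: real assume x: "x \<in> {0..}"
    obtain N :: nat where N: "x \<le> real N" using real_arch_simple by blast
    have "eventually (\<lambda>n. h n x = g x) sequentially"
      unfolding eventually_sequentially h_def
      by (rule exI[of _ N]) (use x N in \<open>auto intro: order_trans\<close>)
    then show "(\<lambda>n. h n x) \<longlonglongrightarrow> g x" by (rule tendsto_eventually)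
  qed
  then show ?thesis by (rule LIMSEQ_le_const2) (use assms hval in auto)
qed

lemma ftc_compare:
  assumes W: "W \<ge> 0"
    and PD: "\<And>w. w \<in> {0..W} \<Longrightarrow> (P has_real_derivative P' (f w)) (at (f w))"
  shows "((\<lambda>w. P' (f w) * (f w - T (f w))) has_integral (P (f 0) - P (f W))) {0..W}"
proof -
  have "((\<lambda>w. P' (f w) * (f w - T (f w))) has_integral (- P (f W)) - (- P (f 0))) {0..W}"
  proof (rule fundamental_theorem_of_calculus[OF W])
    fix w assume w: "w \<in> {0..W}"
    have fdw: "(f has_real_derivative (T (f w) - f w)) (at w within {0..W})"
      by (rule has_field_derivative_subset[OF fd]) (use w in auto)
    have "((\<lambda>w. - P (f w)) has_real_derivative - (P' (f w) * (T (f w) - f w))) (at w within {0..W})"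
      by (rule DERIV_minus[OF DERIV_chain2[OF PD[OF w] fdw]])
    then show "((\<lambda>w. - P (f w)) has_vector_derivative P' (f w) * (f w - T (f w))) (at w within {0..W})"
      by (simp add: has_real_derivative_iff_has_vector_derivative[symmetric] algebra_simps)
  qed
  then show ?thesis by simp
qed

end



context ode begin

lemma upper_bound:
  fixes \<delta> c :: real
  assumes d0: "0 < \<delta>" and d1: "\<delta> < 1" and ld: "1 - \<delta> \<le> lam"
    and c_def: "c = real d * (1 - \<delta>)^d / real K - 1" and c0: "c > 0"
  shows "integral {0..} g \<le> lam / \<delta>^(d-1) - ln ((1-lam) + c*(1-lam)) / c + ln ((1-lam) + c) / c"
proof -
  define A where "A = 1 / \<delta>^(d-1)"
  define P where "P u = A * u - ln ((1-lam) + c*(1-u)) / c" for u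
  define P' where "P' u = A + 1 / ((1-lam) + c*(1-u))" for u
  have Kp: "real K > 0" using K1 by simp
  have Apos: "A * \<delta>^(d-1) = 1" "A \<ge> 0" unfolding A_def using d0 by auto
  have pt: "T u \<le> P' u * (u - T u)" if u0: "0 \<le> u" and u1: "u \<le> 1" for u
  proof -
    define x where "x = 1 - u"
    have x0: "0 \<le> x" "x \<le> 1" using u0 u1 unfolding x_def by auto
    have q0: "(1-lam) + c*x > 0" using l1 c0 x0 by (smt (verit) mult_nonneg_nonneg)
    have Tb: "0 \<le> T u" "T u \<le> lam * u * (1 - x^(d-1))" "T u \<le> lam * u"
      "T u \<le> lam * (1 - real d * x * u^(d-1) / real K)"
      using T_bounds[OF K1 Kd u0 u1 l0] unfolding x_def by auto
    have lu: "lam * u \<le> u" by (rule mult_left_le_one_le) (use u0 l0 l1 in auto)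
    have uT: "0 \<le> u - T u" using Tb(3) lu by linarith
    show ?thesis
    proof (cases "x \<ge> \<delta>")
      case True
      have "\<delta>^(d-1) \<le> x^(d-1)" by (rule power_mono) (use True d0 in auto)
      then have "lam * u * \<delta>^(d-1) \<le> lam * u * x^(d-1)" using l0 u0 by (intro mult_left_mono) auto
      moreover have "u - T u \<ge> u - lam * u + lam * u * x^(d-1)" using Tb(2) by (simp add: algebra_simps)
      ultimately have "lam * u * \<delta>^(d-1) \<le> u - T u" using lu by linarith
      then have "A * (lam * u * \<delta>^(d-1)) \<le> A * (u - T u)" using Apos by (intro mult_left_mono) auto
      moreover have "A * (lam * u * \<delta>^(d-1)) = lam * u"
        by (metis Apos(1) mult.commute mult_1 mult.left_commute)
      ultimately have h1: "lam * u \<le> A * (u - T u)" by (simp only:)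
      have h2: "0 \<le> (u - T u) / ((1-lam) + c*(1 - u))" using uT q0 unfolding x_def by simp
      have "P' u * (u - T u) = A * (u - T u) + (u - T u) / ((1-lam) + c*(1 - u))"
        unfolding P'_def by (simp add: distrib_right)
      then show ?thesis using h1 h2 Tb(3) by linarith
    next
      case False
      have u1d: "1 - \<delta> \<le> u" using False unfolding x_def by simp
      have "(1-\<delta>)^(d-1) \<le> u^(d-1)" by (rule power_mono) (use u1d d1 in auto)
      moreover have "(1-\<delta>) \<le> lam" by (rule ld)
      ultimately have "(1-\<delta>) * (1-\<delta>)^(d-1) \<le> lam * u^(d-1)"
        using d1 by (intro mult_mono) auto
      moreover have "(1-\<delta>) * (1-\<delta>)^(d-1) = (1-\<delta>)^d" using Kd
        by (metis Suc_diff_1 gr_zeroI less_nat_zero_code power_Suc)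
      ultimately have e1: "(1-\<delta>)^d \<le> lam * u^(d-1)" by simp
      have "c * x \<le> (lam * real d * u^(d-1) / real K - 1) * x"
      proof (rule mult_right_mono[OF _ x0(1)])
        have "real d * (1-\<delta>)^d \<le> real d * (lam * u^(d-1))" using e1 by (intro mult_left_mono) auto
        then have "real d * (1-\<delta>)^d / real K \<le> real d * (lam * u^(d-1)) / real K"
          using Kp by (intro divide_right_mono) auto
        then show "c \<le> lam * real d * u^(d-1) / real K - 1" unfolding c_def by (simp add: mult_ac)
      qed
      moreover have "u - T u \<ge> 1 - x - lam + lam * real d * x * u^(d-1) / real K"
        using Tb(4) unfolding x_def by (simp add: algebra_simps)
      ultimately have "u - T u \<ge> (1-lam) + c*x" by (simp add: algebra_simps)
      then have "1 \<le> (u - T u) / ((1-lam) + c*x)" using q0 by simp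
      moreover have "T u \<le> 1" using Tb(3) lu u1 by linarith
      moreover have "0 \<le> A * (u - T u)" using Apos uT by simp
      moreover have "P' u * (u - T u) = A * (u - T u) + (u - T u) / ((1-lam) + c*x)"
        unfolding P'_def x_def by (simp add: distrib_right)
      ultimately show ?thesis by linarith
    qed
  qed
  have PD: "(P has_real_derivative P' (f w)) (at (f w))" if "w \<in> {0..W}" "W \<ge> 0" for w W
  proof -
    have fw: "0 < f w" "f w < 1" using frange[of w] that by auto
    have q: "(1-lam) + c*(1 - f w) > 0" using fw l1 c0 by (smt (verit) mult_pos_pos)
    have dq: "((\<lambda>u. (1-lam) + c*(1-u)) has_real_derivative (- c)) (at (f w))"
      by (auto intro!: derivative_eq_intros)
    have dl: "((\<lambda>u. ln ((1-lam) + c*(1-u))) has_real_derivative inverse ((1-lam) + c*(1 - f w)) * (- c)) (at (f w))"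
      by (rule DERIV_chain2[OF DERIV_ln[OF q] dq])
    have da: "((\<lambda>u. A * u) has_real_derivative A) (at (f w))"
      by (auto intro!: derivative_eq_intros)
    have "(P has_real_derivative A - inverse ((1-lam) + c*(1 - f w)) * (- c) / c) (at (f w))"
      unfolding P_def by (rule DERIV_diff[OF da DERIV_cdivide[OF dl]])
    moreover have "A - inverse ((1-lam) + c*(1 - f w)) * (- c) / c = P' (f w)"
      unfolding P'_def using c0 by (simp add: divide_simps)
    ultimately show ?thesis by simp
  qed
  have P0: "P 0 \<le> P (f W)" if "W \<ge> 0" for W
  proof -
    have fw: "0 < f W" "f W < 1" using frange[of W] that by auto
    have cp: "0 < c * (1 - f W)" using fw c0 by simp
    have "ln ((1-lam) + c*(1 - f W)) \<le> ln ((1-lam) + c*(1 - 0))"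
    proof -
      have q: "0 < (1-lam) + c*(1 - f W)" using cp l1 by linarith
      have "(1-lam) + c*(1 - f W) \<le> (1-lam) + c*(1 - 0)" using fw c0 by simp
      then show ?thesis using q by simp
    qed
    then have "ln ((1-lam) + c*(1 - f W)) / c \<le> ln ((1-lam) + c*(1 - 0)) / c"
      using c0 by (intro divide_right_mono) auto
    moreover have "0 \<le> A * f W" using Apos fw by simp
    ultimately show ?thesis unfolding P_def by simp
  qed
  have "integral {0..} g \<le> P lam - P 0"
  proof (rule integral_le_bound)
    fix n :: nat
    define W where "W = real n"
    have W0: "W \<ge> 0" unfolding W_def by simp
    have I: "((\<lambda>w. P' (f w) * (f w - T (f w))) has_integral (P (f 0) - P (f W))) {0..W}"
      by (rule ftc_compare[OF W0 PD]) (use W0 in auto)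
    have "integral {0..W} g \<le> P (f 0) - P (f W)"
    proof (rule has_integral_le[OF integrable_integral[OF g_int_sub[OF W0]] I])
      fix w assume "w \<in> {0..W}"
      then have "0 \<le> f w" "f w \<le> 1" using frange[of w] by auto
      then show "g w \<le> P' (f w) * (f w - T (f w))" unfolding g_def by (rule pt)
    qed
    then show "integral {0..real n} g \<le> P lam - P 0" using P0[OF W0] f0 unfolding W_def by simp
  qed
  also have "P lam - P 0 = lam / \<delta>^(d-1) - ln ((1-lam) + c*(1-lam)) / c + ln ((1-lam) + c) / c"
    unfolding P_def A_def by simp
  finally show ?thesis .
qed

lemma lower_bound:
  fixes \<delta> c :: real
  assumes d0: "0 < \<delta>" and d1: "\<delta> < 1" and ld: "1 - \<delta> \<le> lam" and dK: "real d * \<delta> \<le> real K"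
    and c_def: "c = real d / real K - 1"
  shows "integral {0..} g \<ge> lam * (1 - real d * \<delta> / real K) / c *
            (ln ((1-lam) + c*\<delta>) - ln ((1-lam) + c*(1-lam)))"
proof -
  have Kp: "real K > 0" using K1 by simp
  have c0: "c > 0" unfolding c_def using Kd Kp by (simp add: field_simps)
  define a where "a = lam * (1 - real d * \<delta> / real K)"
  have a0: "a \<ge> 0" unfolding a_def using dK Kp l0 by (simp add: field_simps)
  define P where "P u = - (a / c) * ln ((1-lam) + c*(1-u))" for u
  define P' where "P' u = a / ((1-lam) + c*(1-u))" for u
  have pt: "P' u * (u - T u) \<le> T u" if u0: "1 - \<delta> \<le> u" and u1: "u \<le> lam" for u
  proof -
    have u0': "0 \<le> u" "u \<le> 1" using u0 u1 d1 l1 by auto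
    define x where "x = 1 - u"
    have x0: "0 \<le> x" "x \<le> \<delta>" using u0 u1 l1 unfolding x_def by auto
    have cx: "0 \<le> c * x" using c0 x0 by simp
    have q0: "(1-lam) + c*x > 0" using l1 cx by linarith
    have Tb: "T u \<le> lam * u" "T u \<ge> lam * (1 - real d * x / real K)"
      using T_bounds[OF K1 Kd u0' l0] unfolding x_def by auto
    have lu: "lam * u \<le> u" by (rule mult_left_le_one_le) (use u0' l0 l1 in auto)
    have uT: "0 \<le> u - T u" using Tb(1) lu by linarith
    have "lam * (real d * x) \<le> real d * x"
      by (rule mult_left_le_one_le) (use l0 l1 x0 in auto)
    then have "lam * real d * x / real K \<le> real d * x / real K"
      using Kp by (intro divide_right_mono) (auto simp: mult.assoc)
    then have "u - T u \<le> (1-lam) + c*x"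
      using Tb(2) unfolding x_def c_def by (simp add: algebra_simps)
    then have r1: "(u - T u) / ((1-lam) + c*x) \<le> 1" using q0 by simp
    have r0: "0 \<le> (u - T u) / ((1-lam) + c*x)" using uT q0 by simp
    have "P' u * (u - T u) = a * ((u - T u) / ((1-lam) + c*x))" unfolding P'_def x_def by simp
    also have "\<dots> \<le> a * 1" using r1 a0 by (intro mult_left_mono) auto
    also have "a \<le> T u"
    proof -
      have "real d * x / real K \<le> real d * \<delta> / real K" using x0 Kp by (intro divide_right_mono mult_left_mono) auto
      then have "lam * (1 - real d * \<delta> / real K) \<le> lam * (1 - real d * x / real K)"
        using l0 by (intro mult_left_mono) auto
      then show ?thesis using Tb(2) unfolding a_def by linarith
    qed
    finally show ?thesis by simp
  qed
  define W1 where "W1 = - ln (1 - \<delta>) / (1 - lam)"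
  have W1: "W1 \<ge> 0"
  proof -
    have "ln (1 - \<delta>) \<le> 0" using d0 d1 by simp
    then have "- ln (1 - \<delta>) \<ge> 0" by simp
    then show ?thesis unfolding W1_def using l1 by (intro divide_nonneg_pos) auto
  qed
  have "f W1 \<le> lam * exp (- ((1 - lam) * W1))" by (rule fupper[OF W1])
  also have "exp (- ((1 - lam) * W1)) = 1 - \<delta>" unfolding W1_def using l1 d1 by simp
  also have "lam * (1 - \<delta>) \<le> 1 - \<delta>" by (rule mult_left_le_one_le) (use l0 l1 d1 in auto)
  finally have fW1: "f W1 \<le> 1 - \<delta>" .
  have "continuous_on {0..W1} f" using fcont by (rule continuous_on_subset) auto
  then obtain W0 where W0: "0 \<le> W0" "W0 \<le> W1" "f W0 = 1 - \<delta>"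
    using IVT2'[of f W1 "1 - \<delta>" 0] fW1 ld f0 W1 by auto
  have PD: "(P has_real_derivative P' (f w)) (at (f w))" if "w \<in> {0..W0}" for w
  proof -
    have fw: "0 < f w" "f w < 1" using frange[of w] that by auto
    have cp: "0 < c * (1 - f w)" using fw c0 by simp
    have q: "(1-lam) + c*(1 - f w) > 0" using cp l1 by linarith
    have dq: "((\<lambda>u. (1-lam) + c*(1-u)) has_real_derivative (- c)) (at (f w))"
      by (auto intro!: derivative_eq_intros)
    have dl: "((\<lambda>u. ln ((1-lam) + c*(1-u))) has_real_derivative inverse ((1-lam) + c*(1 - f w)) * (- c)) (at (f w))"
      by (rule DERIV_chain2[OF DERIV_ln[OF q] dq])
    have "(P has_real_derivative - (a / c) * (inverse ((1-lam) + c*(1 - f w)) * (- c))) (at (f w))"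
      unfolding P_def by (rule DERIV_cmult[OF dl])
    moreover have "- (a / c) * (inverse ((1-lam) + c*(1 - f w)) * (- c)) = P' (f w)"
      unfolding P'_def using c0 by (simp add: divide_simps)
    ultimately show ?thesis by simp
  qed
  have I: "((\<lambda>w. P' (f w) * (f w - T (f w))) has_integral (P (f 0) - P (f W0))) {0..W0}"
    by (rule ftc_compare[OF W0(1) PD])
  have "P (f 0) - P (f W0) \<le> integral {0..W0} g"
  proof (rule has_integral_le[OF I integrable_integral[OF g_int_sub[OF W0(1)]]])
    fix w assume w: "w \<in> {0..W0}"
    have "f W0 \<le> f w" by (rule fanti) (use w in auto)
    moreover have "f w \<le> lam" by (rule fle) (use w in auto)
    ultimately show "P' (f w) * (f w - T (f w)) \<le> g w" unfolding g_def using W0(3) by (intro pt) auto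
  qed
  also have "\<dots> \<le> integral {0..} g"
    by (rule integral_subset_le[OF _ g_int_sub[OF W0(1)] g_int]) (use g_nonneg in auto)
  finally have "P (f 0) - P (f W0) \<le> integral {0..} g" .
  moreover have "P (f 0) - P (f W0) = lam * (1 - real d * \<delta> / real K) / c *
            (ln ((1-lam) + c*\<delta>) - ln ((1-lam) + c*(1-lam)))"
  proof -
    have e: "1 - (1 - \<delta>) = \<delta>" by simp
    show ?thesis unfolding P_def a_def f0 W0(3) e by (simp add: algebra_simps)
  qed
  ultimately show ?thesis by simp
qed

end



lemma R_upper:
  fixes \<delta> c :: real
  assumes o: "ode d K lam f" and d0: "0 < \<delta>" and d1: "\<delta> < 1" and ld: "1 - \<delta> \<le> lam"
    and c_def: "c = real d * (1 - \<delta>)^d / real K - 1" and c0: "c > 0"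
  shows "- mean_wait d K lam f / ln (1 - lam) \<le> (1 / \<delta>^(d-1)) / (- ln (1 - lam)) + 1 / (lam * c)
          + ((ln (1 - lam + c) - ln (1 + c)) / (c * lam)) / (- ln (1 - lam))"
proof -
  interpret ode d K lam f by (rule o)
  define I where "I = integral {0..} g"
  have mw: "mean_wait d K lam f = I / lam" unfolding mean_wait_def I_def g_def by simp
  define Lg where "Lg = - ln (1 - lam)"
  have Lg0: "Lg > 0" unfolding Lg_def using l0 l1 by simp
  have lnm: "ln ((1-lam) + c*(1-lam)) = - Lg + ln (1 + c)"
  proof -
    have "(1-lam) + c*(1-lam) = (1-lam) * (1+c)" by (simp add: algebra_simps)
    then show ?thesis unfolding Lg_def using l1 c0 by (simp add: ln_mult)
  qed
  have up: "I \<le> lam / \<delta>^(d-1) - ln ((1-lam) + c*(1-lam)) / c + ln ((1-lam) + c) / c"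
    unfolding I_def by (rule upper_bound[OF d0 d1 ld c_def c0])
  have "- mean_wait d K lam f / ln (1 - lam) = I / (lam * Lg)"
    unfolding mw Lg_def by simp
  also have "\<dots> \<le> (lam / \<delta>^(d-1) - ln ((1-lam) + c*(1-lam)) / c + ln ((1-lam) + c) / c) / (lam * Lg)"
    by (rule divide_right_mono[OF up]) (use l0 Lg0 in simp)
  also have "\<dots> = (1 / \<delta>^(d-1)) / Lg + 1 / (lam * c) + ((ln (1 - lam + c) - ln (1 + c)) / (c * lam)) / Lg"
    unfolding lnm using l0 Lg0 c0 d0 by (simp add: field_simps)
  finally show ?thesis unfolding Lg_def .
qed

lemma R_lower:
  fixes \<delta> c :: real
  assumes o: "ode d K lam f" and d0: "0 < \<delta>" and d1: "\<delta> < 1" and ld: "1 - \<delta> \<le> lam"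
    and dK: "real d * \<delta> \<le> real K" and c_def: "c = real d / real K - 1"
  shows "- mean_wait d K lam f / ln (1 - lam) \<ge> (1 - real d * \<delta> / real K) / c *
            (1 + (ln (1 - lam + c * \<delta>) - ln (1 + c)) / (- ln (1 - lam)))"
proof -
  interpret ode d K lam f by (rule o)
  have Kp: "real K > 0" using K1 by simp
  have c0: "c > 0" unfolding c_def using Kd Kp by (simp add: field_simps)
  define I where "I = integral {0..} g"
  have mw: "mean_wait d K lam f = I / lam" unfolding mean_wait_def I_def g_def by simp
  define Lg where "Lg = - ln (1 - lam)"
  have Lg0: "Lg > 0" unfolding Lg_def using l0 l1 by simp
  have lnm: "ln ((1-lam) + c*(1-lam)) = - Lg + ln (1 + c)"
  proof -
    have "(1-lam) + c*(1-lam) = (1-lam) * (1+c)" by (simp add: algebra_simps)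
    then show ?thesis unfolding Lg_def using l1 c0 by (simp add: ln_mult)
  qed
  have lo: "I \<ge> lam * (1 - real d * \<delta> / real K) / c *
            (ln ((1-lam) + c*\<delta>) - ln ((1-lam) + c*(1-lam)))"
    unfolding I_def by (rule lower_bound[OF d0 d1 ld dK c_def])
  have "(1 - real d * \<delta> / real K) / c * (1 + (ln (1 - lam + c * \<delta>) - ln (1 + c)) / Lg)
      = (lam * (1 - real d * \<delta> / real K) / c *
            (ln ((1-lam) + c*\<delta>) - ln ((1-lam) + c*(1-lam)))) / (lam * Lg)"
    unfolding lnm using l0 Lg0 c0 Kp by (simp add: field_simps add_divide_distrib)
  also have "\<dots> \<le> I / (lam * Lg)"
    by (rule divide_right_mono[OF lo]) (use l0 Lg0 in simp)
  also have "\<dots> = - mean_wait d K lam f / ln (1 - lam)"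
    unfolding mw Lg_def by simp
  finally show ?thesis unfolding Lg_def .
qed

theorem mainTheorem5:
  fixes d K :: nat and F :: "real \<Rightarrow> real \<Rightarrow> real"
  assumes "1 \<le> K" and "K < d"
    and "\<And>lam. lam \<in> {0<..<1} \<Longrightarrow> F lam 0 = lam"
    and "\<And>lam w. lam \<in> {0<..<1} \<Longrightarrow> w \<ge> 0 \<Longrightarrow>
           (F lam has_real_derivative (T_LL d K lam (F lam w) - F lam w)) (at w within {0..})"
  shows "((\<lambda>lam. - mean_wait d K lam (F lam) / ln (1 - lam))
            \<longlongrightarrow> real K / real (d - K)) (at_left 1)"
proof -
  have odeI: "ode d K lam (F lam)" if "0 < lam" "lam < 1" for lam
    by (unfold_locales) (use assms that in auto)
  define c2 where "c2 = real d / real K - 1"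
  have Kp: "real K > 0" using assms(1) by simp
  have c2pos: "c2 > 0" unfolding c2_def using assms(2) Kp by (simp add: field_simps)
  have L0: "real K / real (d - K) = 1 / c2"
    unfolding c2_def using assms(2) Kp by (simp add: of_nat_diff field_simps)
  have Lg: "filterlim (\<lambda>lam. - ln (1 - lam)) at_infinity (at_left (1::real))"
    by (rule filterlim_at_top_imp_at_infinity) real_asymp
  have ev01: "eventually (\<lambda>lam. 1 - \<delta> \<le> lam \<and> 0 < lam \<and> lam < 1) (at_left 1)"
    if "0 < \<delta>" "\<delta> < 1" for \<delta> :: real
    unfolding eventually_at_left_field by (rule exI[of _ "1 - \<delta>"]) (use that in auto)
  show ?thesis unfolding L0
  proof (rule order_tendstoI)
    fix a assume a: "a < 1 / c2"
    have "((\<lambda>\<delta>. (1 - real d * \<delta> / real K) / c2) \<longlongrightarrow> (1 - real d * 0 / real K) / c2) (at_right 0)"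
      by (intro tendsto_intros) (use c2pos Kp in auto)
    then have "eventually (\<lambda>\<delta>. a < (1 - real d * \<delta> / real K) / c2) (at_right 0)"
      using a Kp by (intro order_tendstoD(1)) auto
    then obtain b where b: "b > 0" "\<And>y. y > 0 \<Longrightarrow> y < b \<Longrightarrow> a < (1 - real d * y / real K) / c2"
      unfolding eventually_at_right_field by auto
    define \<delta> where "\<delta> = min (b/2) (min (1/2) (real K / real d))"
    have dpos: "0 < \<delta>" unfolding \<delta>_def using b Kp assms(2) by auto
    have d1: "\<delta> < 1" unfolding \<delta>_def by auto
    have dK: "real d * \<delta> \<le> real K"
    proof -
      have "\<delta> \<le> real K / real d" unfolding \<delta>_def by auto
      then show ?thesis using assms(2) by (simp add: field_simps)
    qed
    have aB: "a < (1 - real d * \<delta> / real K) / c2" using b(2)[OF dpos] b(1) unfolding \<delta>_def by auto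
    define B where "B = (1 - real d * \<delta> / real K) / c2"
    have "((\<lambda>lam. B * (1 + (ln (1 - lam + c2 * \<delta>) - ln (1 + c2)) / (- ln (1 - lam)))) \<longlongrightarrow> B * (1 + 0)) (at_left 1)"
    proof (intro tendsto_intros tendsto_divide_0[OF _ Lg])
      show "((\<lambda>lam. ln (1 - lam + c2 * \<delta>) - ln (1 + c2)) \<longlongrightarrow> ln (1 - 1 + c2 * \<delta>) - ln (1 + c2)) (at_left 1)"
        by (intro tendsto_intros) (use c2pos dpos in auto)
    qed
    then have "eventually (\<lambda>lam. a < B * (1 + (ln (1 - lam + c2 * \<delta>) - ln (1 + c2)) / (- ln (1 - lam)))) (at_left 1)"
      using aB unfolding B_def by (intro order_tendstoD(1)) auto
    then show "eventually (\<lambda>lam. a < - mean_wait d K lam (F lam) / ln (1 - lam)) (at_left 1)"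
      using ev01[OF dpos d1]
    proof eventually_elim
      case (elim lam)
      have "B * (1 + (ln (1 - lam + c2 * \<delta>) - ln (1 + c2)) / (- ln (1 - lam))) \<le> - mean_wait d K lam (F lam) / ln (1 - lam)"
        unfolding B_def by (rule R_lower[OF odeI dpos d1 _ dK c2_def]) (use elim in auto)
      then show ?case using elim by linarith
    qed
  next
    fix a assume a: "1 / c2 < a"
    define cc where "cc \<delta> = real d * (1 - \<delta>)^d / real K - 1" for \<delta> :: real
    have "(cc \<longlongrightarrow> real d * (1 - 0)^d / real K - 1) (at_right 0)"
      unfolding cc_def by (intro tendsto_intros) (use Kp in auto)
    then have ccl: "(cc \<longlongrightarrow> c2) (at_right 0)" unfolding c2_def by simp
    then have "((\<lambda>\<delta>. 1 / cc \<delta>) \<longlongrightarrow> 1 / c2) (at_right 0)"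
      using c2pos by (intro tendsto_intros) auto
    then have "eventually (\<lambda>\<delta>. 1 / cc \<delta> < a) (at_right 0)"
      using a by (intro order_tendstoD(2)) auto
    moreover have "eventually (\<lambda>\<delta>. 0 < cc \<delta>) (at_right 0)"
      using ccl c2pos by (intro order_tendstoD(1)) auto
    ultimately have "eventually (\<lambda>\<delta>. 1 / cc \<delta> < a \<and> 0 < cc \<delta>) (at_right 0)"
      by (rule eventually_conj)
    then obtain b where b: "b > 0" "\<And>y. y > 0 \<Longrightarrow> y < b \<Longrightarrow> 1 / cc y < a \<and> 0 < cc y"
      unfolding eventually_at_right_field by auto
    define \<delta> where "\<delta> = min (b/2) (1/2)"
    have dpos: "0 < \<delta>" unfolding \<delta>_def using b by auto
    have d1: "\<delta> < 1" unfolding \<delta>_def by auto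
    have ccd: "1 / cc \<delta> < a" "0 < cc \<delta>" using b(2)[OF dpos] b(1) unfolding \<delta>_def by auto
    define c where "c = cc \<delta>"
    have "((\<lambda>lam. (1 / \<delta>^(d-1)) / (- ln (1 - lam)) + 1 / (lam * c)
          + ((ln (1 - lam + c) - ln (1 + c)) / (c * lam)) / (- ln (1 - lam))) \<longlongrightarrow> 0 + 1 / (1 * c) + 0) (at_left 1)"
    proof (intro tendsto_intros tendsto_divide_0[OF _ Lg])
      show "((\<lambda>lam. (ln (1 - lam + c) - ln (1 + c)) / (c * lam)) \<longlongrightarrow> (ln (1 - 1 + c) - ln (1 + c)) / (c * 1)) (at_left 1)"
        by (intro tendsto_intros) (use ccd in \<open>auto simp: c_def\<close>)
    qed (use ccd in \<open>auto simp: c_def\<close>)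
    then have "eventually (\<lambda>lam. (1 / \<delta>^(d-1)) / (- ln (1 - lam)) + 1 / (lam * c)
          + ((ln (1 - lam + c) - ln (1 + c)) / (c * lam)) / (- ln (1 - lam)) < a) (at_left 1)"
      using ccd unfolding c_def by (intro order_tendstoD(2)) auto
    then show "eventually (\<lambda>lam. - mean_wait d K lam (F lam) / ln (1 - lam) < a) (at_left 1)"
      using ev01[OF dpos d1]
    proof eventually_elim
      case (elim lam)
      have "- mean_wait d K lam (F lam) / ln (1 - lam) \<le> (1 / \<delta>^(d-1)) / (- ln (1 - lam)) + 1 / (lam * c)
          + ((ln (1 - lam + c) - ln (1 + c)) / (c * lam)) / (- ln (1 - lam))"
        by (rule R_upper[OF odeI dpos d1 _ _ ]) (use elim ccd in \<open>auto simp: c_def cc_def\<close>)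
      then show ?case using elim by linarith
    qed
  qed
qed


end
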